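(* Let $\mathcal{K}$ be a continuous unitary representation of $\overline{\mathfrak{S}}_\infty$ in a Hilbert space $\mathcal{H}$, and let $n\geq 0$ be an integer. Then the sequence of operators $\{\mathcal{K}({}^n\sigma_m)\}_{m\in\mathbb{N}}$ converges in the weak operator topology to a self-adjoint operator $P_n$.
   Context: $\overline{\mathfrak{S}}_\infty$ is the group of all bijections of $\mathbb{N}=\{1,2,\dots\}$, with the Polish group topology in which the subgroups $\mathfrak{S}(n,\infty)=\{s\in\overline{\mathfrak{S}}_\infty: s(k)=k \text{ for } k=1,\dots,n\}$ form a fundamental system of neighborhoods of the identity; continuity of $\mathcal{K}$ means continuity into the unitary group with the strong operator topology, i.e. for each $\eta\in\mathcal{H}$, $\lim_{k\to\infty}\sup_{s\in\mathfrak{S}(k,\infty)}\|\mathcal{K}(s)\eta-\eta\|=0$. For $k\ne j$, $(k\;j)$ denotes the transposition interchanging $k$ and $j$. Define ${}^n\sigma_m=(n+1\;\;n+m+1)(n+2\;\;n+m+2)\cdots(n+m\;\;n+2m)$. *)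

theory Defs
  imports "HOL-Analysis.Analysis" "HOL-Combinatorics.Transposition"
begin

text \<open>A complex
inner product space is encoded (equivalently) as a real inner product space with a complex
structure for which multiplication by the imaginary unit is orthogonal; the complex inner
product is then recovered as cinner below (conjugate-linear in the first argument,
with real part the real inner product).\<close>

class complex_vector = real_vector +
  fixes scaleC :: "complex \<Rightarrow> 'a \<Rightarrow> 'a" (infixr \<open>*\<^sub>C\<close> 75)
  assumes scaleC_add_right: "a *\<^sub>C (x + y) = a *\<^sub>C x + a *\<^sub>C y"
    and scaleC_add_left: "(a + b) *\<^sub>C x = a *\<^sub>C x + b *\<^sub>C x"
    and scaleC_scaleC: "a *\<^sub>C (b *\<^sub>C x) = (a * b) *\<^sub>C x"
    and scaleC_one: "1 *\<^sub>C x = x"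
    and scaleR_scaleC: "r *\<^sub>R x = (complex_of_real r) *\<^sub>C x"

class complex_inner = complex_vector + real_inner +
  assumes inner_scaleC_ii: "inner (\<i> *\<^sub>C x) (\<i> *\<^sub>C y) = inner x y"

definition cinner :: "'a::complex_inner \<Rightarrow> 'a \<Rightarrow> complex" where
  "cinner x y = Complex (inner x y) (inner (\<i> *\<^sub>C x) y)"

definition clinear :: "('a::complex_vector \<Rightarrow> 'b::complex_vector) \<Rightarrow> bool" where
  "clinear T \<longleftrightarrow> (\<forall>x y. T (x + y) = T x + T y) \<and> (\<forall>c x. T (c *\<^sub>C x) = c *\<^sub>C T x)"

definition bounded_operator :: "('a::complex_inner \<Rightarrow> 'a) \<Rightarrow> bool" where
  "bounded_operator T \<longleftrightarrow> clinear T \<and> (\<exists>C. \<forall>x. norm (T x) \<le> C * norm x)"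

definition unitary :: "('a::complex_inner \<Rightarrow> 'a) \<Rightarrow> bool" where
  "unitary U \<longleftrightarrow> clinear U \<and> surj U \<and> (\<forall>x y. cinner (U x) (U y) = cinner x y)"

definition self_adjoint :: "('a::complex_inner \<Rightarrow> 'a) \<Rightarrow> bool" where
  "self_adjoint T \<longleftrightarrow> bounded_operator T \<and> (\<forall>x y. cinner (T x) y = cinner x (T y))"

definition wot_converges :: "(nat \<Rightarrow> 'a::complex_inner \<Rightarrow> 'a) \<Rightarrow> ('a \<Rightarrow> 'a) \<Rightarrow> bool" where
  "wot_converges A T \<longleftrightarrow> (\<forall>x y. (\<lambda>m. cinner (A m x) y) \<longlonglongrightarrow> cinner (T x) y)"

text \<open>Bijections of \<open>{1,2,...}\<close>, represented as functions on nat fixing 0.\<close>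
definition Sinf :: "(nat \<Rightarrow> nat) set" where
  "Sinf = {s. bij_betw s {1..} {1..} \<and> s 0 = 0}"

definition Sfix :: "nat \<Rightarrow> (nat \<Rightarrow> nat) set" where
  "Sfix n = {s \<in> Sinf. \<forall>k\<in>{1..n}. s k = k}"

definition cont_unitary_rep :: "((nat \<Rightarrow> nat) \<Rightarrow> 'a::complex_inner \<Rightarrow> 'a) \<Rightarrow> bool" where
  "cont_unitary_rep K \<longleftrightarrow>
     (\<forall>s\<in>Sinf. unitary (K s)) \<and>
     K id = id \<and>
     (\<forall>s\<in>Sinf. \<forall>t\<in>Sinf. K (s \<circ> t) = K s \<circ> K t) \<and>
     (\<forall>\<eta>. (\<lambda>k. SUP s\<in>Sfix k. norm (K s \<eta> - \<eta>)) \<longlonglongrightarrow> 0)"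

definition sigma :: "nat \<Rightarrow> nat \<Rightarrow> nat \<Rightarrow> nat" where
  "sigma n m = foldr (\<lambda>i f. Transposition.transpose (n + i) (n + m + i) \<circ> f) [1..<m+1] id"

end

theory Submission
  imports Defs
begin


lemma clinear_add: "clinear T \<Longrightarrow> T (x + y) = T x + T y"
  unfolding clinear_def by blast

lemma clinear_diff: assumes "clinear T" shows "T (x - y) = T x - T y"
proof -
  have "T x = T ((x - y) + y)" by simp
  also have "... = T (x-y) + T y" using assms unfolding clinear_def by blast
  finally show ?thesis by (simp add: algebra_simps)
qed

lemma clinear_scaleC: "clinear T \<Longrightarrow> T (c *\<^sub>C x) = c *\<^sub>C T x"
  unfolding clinear_def by blast

lemma unitary_inner: assumes "unitary U" shows "inner (U x) (U y) = inner x y"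
proof -
  have "cinner (U x) (U y) = cinner x y" using assms unfolding unitary_def by blast
  then show ?thesis unfolding cinner_def by simp
qed

lemma unitary_norm: assumes "unitary U" shows "norm (U x) = norm x"
  using unitary_inner[OF assms, of x x] by (simp add: norm_eq_sqrt_inner)

lemma ii_ii: "\<i> *\<^sub>C (\<i> *\<^sub>C (u::'a::complex_vector)) = - u"
proof -
  have "\<i> *\<^sub>C (\<i> *\<^sub>C u) = (complex_of_real (-1)) *\<^sub>C u" by (simp add: scaleC_scaleC)
  also have "... = (-1) *\<^sub>R u" by (rule scaleR_scaleC[symmetric])
  finally show ?thesis by simp
qed

lemma inner_ii: "inner (\<i> *\<^sub>C (u::'a::complex_inner)) y = - inner u (\<i> *\<^sub>C y)"
proof -
  have "inner (\<i> *\<^sub>C u) y = inner (\<i> *\<^sub>C (\<i> *\<^sub>C u)) (\<i> *\<^sub>C y)" by (simp add: inner_scaleC_ii)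
  then show ?thesis by (simp add: ii_ii)
qed

lemma scaleC_decomp: "c *\<^sub>C (u::'a::complex_vector) = Re c *\<^sub>R u + Im c *\<^sub>R (\<i> *\<^sub>C u)"
proof -
  have "c *\<^sub>C u = (complex_of_real (Re c) + complex_of_real (Im c) * \<i>) *\<^sub>C u"
  proof -
    have ceq: "complex_of_real (Re c) + complex_of_real (Im c) * \<i> = c" by (simp add: complex_eq_iff)
    show ?thesis by (simp only: ceq)
  qed
  also have "... = complex_of_real (Re c) *\<^sub>C u + complex_of_real (Im c) *\<^sub>C (\<i> *\<^sub>C u)"
    by (simp add: scaleC_add_left scaleC_scaleC)
  finally show ?thesis by (simp add: scaleR_scaleC)
qed

lemma inner_scaleC_decomp: "inner (c *\<^sub>C (u::'a::complex_inner)) y = Re c * inner u y + Im c * inner (\<i> *\<^sub>C u) y"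
  by (simp only: scaleC_decomp[of c] inner_add_left inner_scaleR_left)

lemma inner_ext: assumes "\<And>z. inner u z = inner (v::'a::real_inner) z" shows "u = v"
proof -
  have "inner (u - v) (u - v) = 0" using assms by (simp add: inner_diff_left)
  then show ?thesis by simp
qed

lemma sq_add: "(norm (x + y))\<^sup>2 = (norm x)\<^sup>2 + (norm y)\<^sup>2 + 2 * inner x (y::'a::real_inner)"
  using dot_norm[of x y] by (simp add: field_simps)

lemma riesz_real:
  fixes f :: "'a::{real_inner, complete_space} \<Rightarrow> real"
  assumes bl: "bounded_linear f"
  shows "\<exists>w. \<forall>x. f x = inner w x"
proof -
  interpret f: bounded_linear f by fact
  obtain C where C: "\<And>x. norm (f x) \<le> norm x * C" "C > 0" using f.pos_bounded by blast
  define \<phi> where "\<phi> x = (norm x)\<^sup>2 / 2 - f x" for x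
  have lb: "- (C\<^sup>2) / 2 \<le> \<phi> x" for x
  proof -
    have "f x \<le> norm x * C" using C(1)[of x] by simp
    moreover have "0 \<le> (norm x - C)\<^sup>2" by simp
    ultimately show ?thesis unfolding \<phi>_def by (simp add: power2_eq_square algebra_simps)
  qed
  define c where "c = Inf (range \<phi>)"
  have bdd: "bdd_below (range \<phi>)" using lb by (intro bdd_belowI2) 
  have cle: "c \<le> \<phi> x" for x unfolding c_def by (rule cInf_lower[OF _ bdd]) simp
  have "\<exists>x. \<phi> x < c + 1 / (real j + 1)" for j
  proof -
    have "Inf (range \<phi>) < c + 1 / (real j + 1)" unfolding c_def by simp
    then show ?thesis by (subst (asm) cInf_less_iff[OF _ bdd]) auto
  qed
  then obtain xs where xs: "\<And>j. \<phi> (xs j) < c + 1 / (real j + 1)" by metis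
  have par: "(norm (xs i - xs j))\<^sup>2 \<le> 4 * (1 / (real i + 1) + 1 / (real j + 1))" for i j
  proof -
    define m where "m = (1/2) *\<^sub>R (xs i + xs j)"
    have "c \<le> \<phi> m" by (rule cle)
    have fm: "f m = (f (xs i) + f (xs j)) / 2" unfolding m_def by (simp add: f.scaleR f.add)
    have nm: "(norm m)\<^sup>2 = (norm (xs i + xs j))\<^sup>2 / 4" unfolding m_def
      by (simp add: power_mult_distrib power2_eq_square)
    have s1: "(norm (xs i + xs j))\<^sup>2 = (norm (xs i))\<^sup>2 + (norm (xs j))\<^sup>2 + 2 * inner (xs i) (xs j)"
      using sq_add by blast
    have s2: "(norm (xs i - xs j))\<^sup>2 = (norm (xs i))\<^sup>2 + (norm (xs j))\<^sup>2 - 2 * inner (xs i) (xs j)"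
      using sq_add[of "xs i" "- xs j"] by simp
    have "(norm (xs i - xs j))\<^sup>2 = 2 * (norm (xs i))\<^sup>2 + 2 * (norm (xs j))\<^sup>2 - 4 * (norm m)\<^sup>2"
      using nm s1 s2 by argo
    also have "... \<le> 4 * (\<phi> (xs i) + \<phi> (xs j) - 2 * c)"
      using \<open>c \<le> \<phi> m\<close> fm unfolding \<phi>_def by argo
    also have "... \<le> 4 * (1 / (real i + 1) + 1 / (real j + 1))"
      using xs[of i] xs[of j] by simp
    finally show ?thesis .
  qed
  have "Cauchy xs"
  proof (rule metric_CauchyI)
    fix e :: real assume "e > 0"
    obtain N :: nat where N: "8 / e\<^sup>2 < real N" using reals_Archimedean2 by blast
    have "8 / (real N + 1) < e\<^sup>2"
    proof -
      have "8 < e\<^sup>2 * real N" using N \<open>e>0\<close> by (simp add: field_simps)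
      then have "8 < e\<^sup>2 * (real N + 1)" using \<open>e>0\<close> by (simp add: distrib_left) (smt (verit) zero_less_power)
      then show ?thesis by (simp add: field_simps)
    qed
    show "\<exists>M. \<forall>m\<ge>M. \<forall>n\<ge>M. dist (xs m) (xs n) < e"
    proof (intro exI allI impI)
      fix i j assume "N \<le> i" "N \<le> j"
      have "1 / (real i + 1) \<le> 1 / (real N + 1)" "1 / (real j + 1) \<le> 1 / (real N + 1)"
        using \<open>N \<le> i\<close> \<open>N \<le> j\<close> by (simp_all add: frac_le)
      then have "(norm (xs i - xs j))\<^sup>2 < e\<^sup>2" using par[of i j] \<open>8 / (real N + 1) < e\<^sup>2\<close> by simp
      then show "dist (xs i) (xs j) < e" using \<open>e > 0\<close>
        by (simp add: dist_norm power_less_imp_less_base)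
    qed
  qed
  then obtain w where w: "xs \<longlonglongrightarrow> w" using Cauchy_convergent_iff convergent_def by blast
  have "(\<lambda>j. \<phi> (xs j)) \<longlonglongrightarrow> \<phi> w" unfolding \<phi>_def
    by (intro tendsto_intros w f.tendsto) simp
  moreover have "(\<lambda>j. \<phi> (xs j)) \<longlonglongrightarrow> c"
  proof (rule real_tendsto_sandwich[where f="\<lambda>_. c" and h="\<lambda>j. c + 1 / (real j + 1)"])
    show "\<forall>\<^sub>F j in sequentially. c \<le> \<phi> (xs j)" using cle by simp
    show "\<forall>\<^sub>F j in sequentially. \<phi> (xs j) \<le> c + 1 / (real j + 1)" using xs by (simp add: less_imp_le)
    show "(\<lambda>_. c) \<longlonglongrightarrow> c" by simp
    show "(\<lambda>j. c + 1 / (real j + 1)) \<longlonglongrightarrow> c"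
      using tendsto_add[OF tendsto_const[of c] LIMSEQ_inverse_real_of_nat] by (simp add: inverse_eq_divide add.commute)
  qed
  ultimately have wmin: "\<phi> w = c" using LIMSEQ_unique by blast
  have "f v = inner w v" for v
  proof -
    define a where "a = inner w v - f v"
    define b where "b = (norm v)\<^sup>2 / 2"
    have "\<phi> w \<le> \<phi> (w + t *\<^sub>R v)" for t using cle wmin by simp
    have e1: "(norm (w + t *\<^sub>R v))\<^sup>2 = (norm w)\<^sup>2 + t\<^sup>2 * (norm v)\<^sup>2 + 2 * (t * inner w v)" for t
      using sq_add[of w "t *\<^sub>R v"] by (simp add: power_mult_distrib)
    have ge: "0 \<le> t * a + t\<^sup>2 * b" for t
    proof -
      have "\<phi> w \<le> \<phi> (w + t *\<^sub>R v)" by fact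
      then have "(norm w)\<^sup>2 / 2 - f w \<le> ((norm w)\<^sup>2 + t\<^sup>2 * (norm v)\<^sup>2 + 2 * (t * inner w v)) / 2 - (f w + t * f v)"
        unfolding \<phi>_def e1 by (simp add: f.add f.scaleR)
      then show ?thesis unfolding a_def b_def by (simp add: algebra_simps)
    qed
    have "b \<ge> 0" unfolding b_def by simp
    have "a = 0"
    proof (rule ccontr)
      assume "a \<noteq> 0"
      define t where "t = - a / (2 * b + 1)"
      have "t * a + t\<^sup>2 * b = a\<^sup>2 * (b - (2*b+1)) / (2*b+1)\<^sup>2"
      proof -
        have d: "2*b+1 \<noteq> 0" using \<open>b \<ge> 0\<close> by simp
        show ?thesis unfolding t_def using d by (simp add: power2_eq_square divide_simps) algebra
      qed
      also have "... < 0" using \<open>a \<noteq> 0\<close> \<open>b \<ge> 0\<close>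
        by (intro divide_neg_pos mult_pos_neg) auto
      finally show False using ge[of t] by simp
    qed
    then show ?thesis unfolding a_def by simp
  qed
  then show ?thesis by blast
qed



definition sig_f :: "nat \<Rightarrow> nat \<Rightarrow> nat \<Rightarrow> nat" where
  "sig_f n m j = (if n < j \<and> j \<le> n + m then j + m else if n + m < j \<and> j \<le> n + 2 * m then j - m else j)"

lemma foldr_comp: "foldr (\<lambda>i f. T i \<circ> f) xs z = foldr (\<lambda>i f. T i \<circ> f) xs id \<circ> z"
  by (induction xs) auto

lemma sigma_partial:
  "j0 \<le> m \<Longrightarrow> foldr (\<lambda>i f. Transposition.transpose (n + i) (n + m + i) \<circ> f) [1..<j0+1] id =
     (\<lambda>x. if n < x \<and> x \<le> n + j0 then x + m else if n + m < x \<and> x \<le> n + m + j0 then x - m else x)"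
proof (induction j0)
  case 0
  then show ?case by auto
next
  case (Suc j0)
  have IH: "foldr (\<lambda>i f. Transposition.transpose (n + i) (n + m + i) \<circ> f) [1..<j0+1] id =
     (\<lambda>x. if n < x \<and> x \<le> n + j0 then x + m else if n + m < x \<and> x \<le> n + m + j0 then x - m else x)"
    by (rule Suc.IH) (use Suc.prems in simp)
  have "[1..<Suc j0 + 1] = [1..<j0+1] @ [j0+1]" by simp
  then have "foldr (\<lambda>i f. Transposition.transpose (n + i) (n + m + i) \<circ> f) [1..<Suc j0+1] id =
     foldr (\<lambda>i f. Transposition.transpose (n + i) (n + m + i) \<circ> f) [1..<j0+1] id \<circ>
       Transposition.transpose (n + (j0+1)) (n + m + (j0+1))"
    by (simp only: foldr_append) (subst foldr_comp, simp)
  also have "... = (\<lambda>x. if n < x \<and> x \<le> n + Suc j0 then x + m else if n + m < x \<and> x \<le> n + m + Suc j0 then x - m else x)"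
    by (subst IH) (use Suc.prems in \<open>auto simp: Transposition.transpose_def fun_eq_iff\<close>)
  finally show ?case .
qed

lemma sigma_eq: "sigma n m = sig_f n m"
  unfolding sigma_def sig_f_def using sigma_partial[of m m n] by (auto simp: fun_eq_iff)

lemma sig_inv: "sig_f n m (sig_f n m j) = j"
  unfolding sig_f_def by auto

lemma Sinf_inv: assumes "\<And>j. s (s j) = j" "s 0 = 0" "\<And>j. j \<ge> 1 \<Longrightarrow> s j \<ge> 1" shows "s \<in> Sinf"
  unfolding Sinf_def using assms by (auto intro!: bij_betw_byWitness[where f'=s])

lemma Sinf_comp: "s \<in> Sinf \<Longrightarrow> t \<in> Sinf \<Longrightarrow> s \<circ> t \<in> Sinf"
  unfolding Sinf_def by (auto intro: bij_betw_trans)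

lemma sig_Sinf: "sig_f n m \<in> Sinf"
  by (rule Sinf_inv) (auto simp: sig_inv sig_f_def)

definition gsw :: "nat \<Rightarrow> nat \<Rightarrow> nat \<Rightarrow> nat \<Rightarrow> nat" where
  "gsw n m M j = (if n + m < j \<and> j \<le> n + 2 * m then j + (M - m)
     else if n + M < j \<and> j \<le> n + M + m then j - (M - m) else j)"

lemma gsw_inv: "2 * m \<le> M \<Longrightarrow> gsw n m M (gsw n m M j) = j"
  unfolding gsw_def by auto

lemma gsw_Sinf: "2 * m \<le> M \<Longrightarrow> gsw n m M \<in> Sinf"
  by (rule Sinf_inv) (auto simp: gsw_inv gsw_def)

lemma gsw_fix: "2 * m \<le> M \<Longrightarrow> k \<le> n + m \<Longrightarrow> gsw n m M \<in> Sfix k"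
  unfolding Sfix_def using gsw_Sinf by (auto simp: gsw_def)

lemma rho_fix: assumes "2 * m \<le> M" "j \<le> n + m"
  shows "sig_f n m (gsw n m M (sig_f n M (gsw n m M j))) = j"
  using assms unfolding gsw_def sig_f_def by auto

lemma rho_Sfix: assumes "2 * m \<le> M" "k \<le> n + m"
  shows "sig_f n m \<circ> gsw n m M \<circ> sig_f n M \<circ> gsw n m M \<in> Sfix k"
  unfolding Sfix_def using assms rho_fix[OF assms(1)]
  by (auto intro!: Sinf_comp sig_Sinf gsw_Sinf)

lemma comp_eq: assumes "2 * m \<le> M"
  shows "sig_f n M \<circ> gsw n m M = gsw n m M \<circ> (sig_f n m \<circ> (sig_f n m \<circ> gsw n m M \<circ> sig_f n M \<circ> gsw n m M))"
  using assms by (simp add: fun_eq_iff sig_inv gsw_inv)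


lemma rep_unitary: assumes "cont_unitary_rep K" "s \<in> Sinf" shows "unitary (K s)"
proof -
  have "\<forall>s\<in>Sinf. unitary (K s)" using assms(1) unfolding cont_unitary_rep_def by (elim conjE)
  then show ?thesis using assms(2) by (rule bspec)
qed

lemma rep_comp: assumes "cont_unitary_rep K" "s \<in> Sinf" "t \<in> Sinf" shows "K (s \<circ> t) = K s \<circ> K t"
proof -
  have "\<forall>s\<in>Sinf. \<forall>t\<in>Sinf. K (s \<circ> t) = K s \<circ> K t" using assms(1) unfolding cont_unitary_rep_def by (elim conjE)
  then have "\<forall>t\<in>Sinf. K (s \<circ> t) = K s \<circ> K t" using assms(2) by (rule bspec)
  then show ?thesis using assms(3) by (rule bspec)
qed

lemma unitary_clinear: "unitary U \<Longrightarrow> clinear U"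
  unfolding unitary_def by (elim conjE)

lemma unitary_CS: assumes "unitary U" shows "\<bar>inner (U a) b\<bar> \<le> norm a * norm b"
  using Cauchy_Schwarz_ineq2[of "U a" b] unitary_norm[OF assms] by simp

lemma Sfix_Sinf: "s \<in> Sfix k \<Longrightarrow> s \<in> Sinf"
  unfolding Sfix_def by simp

lemma sup_bound:
  assumes K: "cont_unitary_rep K" and s: "s \<in> Sfix k"
  shows "norm (K s x - x) \<le> (SUP s\<in>Sfix k. norm (K s x - x))"
proof (rule cSUP_upper[OF s, where f="\<lambda>s. norm (K s x - x)"])
  show "bdd_above ((\<lambda>s. norm (K s x - x)) ` Sfix k)"
  proof (rule bdd_aboveI2)
    fix t assume "t \<in> Sfix k"
    then have "t \<in> Sinf" by (rule Sfix_Sinf)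
    then have "unitary (K t)" by (rule rep_unitary[OF K])
    then have "norm (K t x) = norm x" by (rule unitary_norm)
    then show "norm (K t x - x) \<le> 2 * norm x"
      using norm_triangle_ineq4[of "K t x" x] by linarith
  qed
qed

lemma key:
  assumes K: "cont_unitary_rep K" and km: "k \<le> m" and mM: "2 * m \<le> M"
    and bx: "\<And>s. s \<in> Sfix k \<Longrightarrow> norm (K s x - x) \<le> e"
    and hy: "\<And>s. s \<in> Sfix k \<Longrightarrow> norm (K s y - y) \<le> e"
  shows "\<bar>inner (K (sig_f n M) x) y - inner (K (sig_f n m) x) y\<bar> \<le> e * (2 * norm y + norm x)"
proof -
  define g where "g = gsw n m M"
  define sm where "sm = sig_f n m"
  define sM where "sM = sig_f n M"
  define \<rho> where "\<rho> = sm \<circ> g \<circ> sM \<circ> g"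
  have kk: "k \<le> n + m" using km by simp
  have gS: "g \<in> Sinf" unfolding g_def using gsw_Sinf[OF mM] .
  have gF: "g \<in> Sfix k" unfolding g_def using gsw_fix[OF mM kk] .
  have rF: "\<rho> \<in> Sfix k" unfolding \<rho>_def g_def sm_def sM_def using rho_Sfix[OF mM kk] .
  have rS: "\<rho> \<in> Sinf" using rF Sfix_Sinf by blast
  have smS: "sm \<in> Sinf" "sM \<in> Sinf" unfolding sm_def sM_def using sig_Sinf by auto
  have ce: "sM \<circ> g = g \<circ> (sm \<circ> \<rho>)" unfolding sM_def g_def sm_def \<rho>_def using comp_eq[OF mM] .
  have "K (sM \<circ> g) = K (g \<circ> (sm \<circ> \<rho>))" using ce by simp
  moreover have "K (sM \<circ> g) = K sM \<circ> K g" by (rule rep_comp[OF K smS(2) gS])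
  moreover have "K (g \<circ> (sm \<circ> \<rho>)) = K g \<circ> (K sm \<circ> K \<rho>)"
    using rep_comp[OF K gS Sinf_comp[OF smS(1) rS]] rep_comp[OF K smS(1) rS] by simp
  ultimately have "K sM \<circ> K g = K g \<circ> (K sm \<circ> K \<rho>)" by simp
  then have "(K sM \<circ> K g) x = (K g \<circ> (K sm \<circ> K \<rho>)) x" by (rule arg_cong)
  then have ce2: "K sM (K g x) = K g (K sm (K \<rho> x))" by simp
  have Ug: "unitary (K g)" and Um: "unitary (K sm)" and UM: "unitary (K sM)"
    using rep_unitary[OF K] gS smS by auto
  have t1: "\<bar>inner (K sM x) y - inner (K sM (K g x)) y\<bar> \<le> e * norm y"
  proof -
    have "inner (K sM x) y - inner (K sM (K g x)) y = inner (K sM (x - K g x)) y"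
      using clinear_diff[OF unitary_clinear[OF UM]] by (simp add: inner_diff_left)
    also have "\<bar>...\<bar> \<le> norm (x - K g x) * norm y" by (rule unitary_CS[OF UM])
    also have "... \<le> e * norm y" using bx[OF gF] by (simp add: norm_minus_commute mult_right_mono)
    finally show ?thesis .
  qed
  have t2: "\<bar>inner (K g (K sm (K \<rho> x))) y - inner (K g (K sm x)) y\<bar> \<le> e * norm y"
  proof -
    have "inner (K g (K sm (K \<rho> x))) y - inner (K g (K sm x)) y = inner (K g (K sm (K \<rho> x - x))) y"
      using clinear_diff[OF unitary_clinear[OF Ug]] clinear_diff[OF unitary_clinear[OF Um]]
      by (simp add: inner_diff_left)
    also have "\<bar>...\<bar> \<le> norm (K sm (K \<rho> x - x)) * norm y" by (rule unitary_CS[OF Ug])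
    also have "... \<le> e * norm y" using bx[OF rF] unitary_norm[OF Um] by (simp add: mult_right_mono)
    finally show ?thesis .
  qed
  have t3: "\<bar>inner (K g (K sm x)) y - inner (K sm x) y\<bar> \<le> e * norm x"
  proof -
    have "inner (K g (K sm x)) y - inner (K sm x) y = inner (K g (K sm x)) (y - K g y)"
      using unitary_inner[OF Ug] by (simp add: inner_diff_right)
    also have "\<bar>...\<bar> \<le> norm (K g (K sm x)) * norm (y - K g y)" by (rule Cauchy_Schwarz_ineq2)
    also have "... = norm x * norm (K g y - y)"
      using unitary_norm[OF Ug] unitary_norm[OF Um] by (simp add: norm_minus_commute)
    also have "... \<le> norm x * e" using hy[OF gF] by (simp add: mult_left_mono)
    finally show ?thesis by (simp add: mult.commute)
  qed
  have ee: "e * (2 * norm y + norm x) = e * norm y + e * norm y + e * norm x"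
    by (simp add: algebra_simps)
  have fin: "\<bar>inner (K sM x) y - inner (K sm x) y\<bar> \<le> e * (2 * norm y + norm x)"
    unfolding ee using t1[unfolded ce2] t2 t3 by linarith
  show ?thesis using fin unfolding sm_def sM_def .
qed

lemma conv:
  assumes K: "cont_unitary_rep K"
  shows "convergent (\<lambda>j. inner (K (sig_f n j) x) y)"
proof -
  define b where "b j = inner (K (sig_f n j) x) y" for j
  have "Cauchy b"
  proof (rule metric_CauchyI)
    fix \<epsilon> :: real assume "\<epsilon> > 0"
    define C where "C = 2 * norm y + norm x"
    have "C \<ge> 0" unfolding C_def by simp
    define e where "e = \<epsilon> / (2 * C + 1)"
    have "e > 0" unfolding e_def using \<open>\<epsilon> > 0\<close> \<open>C \<ge> 0\<close> by simp
    have "2 * e * C < \<epsilon>"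
    proof -
      have "2 * e * C = \<epsilon> * (2 * C) / (2 * C + 1)" unfolding e_def by simp
      also have "... < \<epsilon>" using \<open>\<epsilon> > 0\<close> \<open>C \<ge> 0\<close> by (simp add: field_simps)
      finally show ?thesis .
    qed
    have ev: "\<exists>N. \<forall>k\<ge>N. (SUP s\<in>Sfix k. norm (K s z - z)) < e" for z
    proof -
      have "(\<lambda>k. SUP s\<in>Sfix k. norm (K s z - z)) \<longlonglongrightarrow> 0"
        using K unfolding cont_unitary_rep_def by blast
      from order_tendstoD(2)[OF this \<open>e > 0\<close>] show ?thesis
        by (simp add: eventually_sequentially)
    qed
    obtain N1 where N1: "\<And>k. k \<ge> N1 \<Longrightarrow> (SUP s\<in>Sfix k. norm (K s x - x)) < e" using ev by blast
    obtain N2 where N2: "\<And>k. k \<ge> N2 \<Longrightarrow> (SUP s\<in>Sfix k. norm (K s y - y)) < e" using ev by blast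
    define k where "k = N1 + N2"
    have bx: "norm (K s x - x) \<le> e" if "s \<in> Sfix k" for s
      using sup_bound[OF K that, of x] N1[of k] unfolding k_def by simp
    have hy: "norm (K s y - y) \<le> e" if "s \<in> Sfix k" for s
      using sup_bound[OF K that, of y] N2[of k] unfolding k_def by simp
    show "\<exists>M. \<forall>i\<ge>M. \<forall>j\<ge>M. dist (b i) (b j) < \<epsilon>"
    proof (intro exI allI impI)
      fix i j assume "k \<le> i" "k \<le> j"
      define M where "M = 2 * (i + j)"
      have "\<bar>b M - b i\<bar> \<le> e * C" unfolding b_def C_def
        by (rule key[OF K \<open>k \<le> i\<close> _ bx hy]) (simp add: M_def)
      moreover have "\<bar>b M - b j\<bar> \<le> e * C" unfolding b_def C_def
        by (rule key[OF K \<open>k \<le> j\<close> _ bx hy]) (simp add: M_def)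
      ultimately have "\<bar>b i - b j\<bar> \<le> 2 * e * C" by linarith
      then show "dist (b i) (b j) < \<epsilon>" using \<open>2 * e * C < \<epsilon>\<close> by (simp add: dist_real_def)
    qed
  qed
  then show ?thesis unfolding b_def using Cauchy_convergent_iff by blast
qed


theorem lemma1:
  fixes K :: "(nat \<Rightarrow> nat) \<Rightarrow> 'h::{complex_inner, complete_space} \<Rightarrow> 'h"
    and n :: nat
  assumes "cont_unitary_rep K"
  shows "\<exists>P. self_adjoint P \<and> wot_converges (\<lambda>m. K (sigma n (Suc m))) P"
proof -
  note K = assms
  define A where "A m = K (sig_f n (Suc m))" for m
  have AU: "unitary (A m)" for m unfolding A_def using rep_unitary[OF K sig_Sinf] .
  have AL: "clinear (A m)" for m using unitary_clinear[OF AU] .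
  have AA: "A m (A m z) = z" for m z
  proof -
    have Kid: "K id = id" using K unfolding cont_unitary_rep_def by (elim conjE)
    have e: "sig_f n (Suc m) \<circ> sig_f n (Suc m) = id" by (simp add: fun_eq_iff sig_inv)
    have "K (sig_f n (Suc m) \<circ> sig_f n (Suc m)) = id" unfolding e by (rule Kid)
    then have "K (sig_f n (Suc m)) \<circ> K (sig_f n (Suc m)) = id" using rep_comp[OF K sig_Sinf sig_Sinf] by simp
    then have "(K (sig_f n (Suc m)) \<circ> K (sig_f n (Suc m))) z = id z" by (rule arg_cong)
    then show ?thesis unfolding A_def by simp
  qed
  have Asa: "inner (A m a) b = inner a (A m b)" for m a b
  proof -
    have "inner (A m a) b = inner (A m a) (A m (A m b))" by (simp add: AA)
    also have "... = inner a (A m b)" by (rule unitary_inner[OF AU])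
    finally show ?thesis .
  qed
  define Lf where "Lf x z = lim (\<lambda>j. inner (K (sig_f n j) x) z)" for x z
  have lim: "(\<lambda>m. inner (A m x) z) \<longlonglongrightarrow> Lf x z" for x z
  proof -
    have "(\<lambda>j. inner (K (sig_f n j) x) z) \<longlonglongrightarrow> Lf x z"
      unfolding Lf_def using conv[OF K] convergent_LIMSEQ_iff by blast
    then show ?thesis unfolding A_def by (rule LIMSEQ_Suc)
  qed
  have Lbound: "\<bar>Lf x a\<bar> \<le> norm x * norm a" for x a
  proof -
    have l1: "(\<lambda>m. \<bar>inner (A m x) a\<bar>) \<longlonglongrightarrow> \<bar>Lf x a\<bar>" by (intro tendsto_rabs lim)
    have "\<bar>inner (A m x) a\<bar> \<le> norm x * norm a" for m by (rule unitary_CS[OF AU])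
    then have b1: "\<exists>N. \<forall>m\<ge>N. \<bar>inner (A m x) a\<bar> \<le> norm x * norm a" by blast
    show "\<bar>Lf x a\<bar> \<le> norm x * norm a" by (rule LIMSEQ_le_const2[OF l1 b1])
  qed
  have bl: "bounded_linear (Lf x)" for x
  proof (rule bounded_linear_intro)
    fix a b
    have "(\<lambda>m. inner (A m x) (a + b)) \<longlonglongrightarrow> Lf x a + Lf x b"
      unfolding inner_add_right by (intro tendsto_add lim)
    then show "Lf x (a + b) = Lf x a + Lf x b" using LIMSEQ_unique[OF lim] by blast
  next
    fix r a
    have "(\<lambda>m. inner (A m x) (r *\<^sub>R a)) \<longlonglongrightarrow> r * Lf x a"
      unfolding inner_scaleR_right by (intro tendsto_mult lim tendsto_const)
    then have "Lf x (r *\<^sub>R a) = r * Lf x a" by (rule LIMSEQ_unique[OF lim])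
    then show "Lf x (r *\<^sub>R a) = r *\<^sub>R Lf x a" by simp
  next
    fix a
    show "norm (Lf x a) \<le> norm a * norm x" using Lbound[of x a] by (simp add: mult.commute)
  qed
  define P where "P x = (SOME w. \<forall>z. Lf x z = inner w z)" for x
  have PL: "Lf x z = inner (P x) z" for x z
  proof -
    have ex: "\<exists>w. \<forall>z. Lf x z = inner w z" by (rule riesz_real[OF bl])
    have "\<forall>z. Lf x z = inner (P x) z" unfolding P_def by (rule someI_ex[OF ex])
    then show ?thesis by blast
  qed
  have cv: "(\<lambda>m. inner (A m x) z) \<longlonglongrightarrow> inner (P x) z" for x z using lim[of x z] unfolding PL .
  have cvi: "(\<lambda>m. inner (\<i> *\<^sub>C A m x) z) \<longlonglongrightarrow> inner (\<i> *\<^sub>C P x) z" for x z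
    unfolding inner_ii by (intro tendsto_minus cv)
  have wot: "wot_converges A P"
    unfolding wot_converges_def cinner_def by (intro allI tendsto_Complex cv cvi)
  have Padd: "P (a + b) = P a + P b" for a b
  proof (rule inner_ext)
    fix z
    have "(\<lambda>m. inner (A m (a + b)) z) \<longlonglongrightarrow> inner (P a + P b) z"
      unfolding clinear_add[OF AL] inner_add_left by (intro tendsto_add cv)
    then show "inner (P (a + b)) z = inner (P a + P b) z" using LIMSEQ_unique[OF cv] by blast
  qed
  have Pscale: "P (c *\<^sub>C a) = c *\<^sub>C P a" for c a
  proof (rule inner_ext)
    fix z
    have "(\<lambda>m. inner (A m (c *\<^sub>C a)) z) \<longlonglongrightarrow> inner (c *\<^sub>C P a) z"
      unfolding clinear_scaleC[OF AL] inner_scaleC_decomp[of c] by (intro tendsto_intros cv cvi)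
    then show "inner (P (c *\<^sub>C a)) z = inner (c *\<^sub>C P a) z" using LIMSEQ_unique[OF cv] by blast
  qed
  have Pnorm: "norm (P x) \<le> 1 * norm x" for x
  proof (cases "norm (P x) = 0")
    case True then show ?thesis by simp
  next
    case False
    then have pos: "0 < norm (P x)" by simp
    have "Lf x (P x) \<le> norm x * norm (P x)" using Lbound[of x "P x"] abs_ge_self[of "Lf x (P x)"] by linarith
    then have "inner (P x) (P x) \<le> norm x * norm (P x)" by (simp only: PL)
    moreover have "norm (P x) * norm (P x) = inner (P x) (P x)"
      using power2_norm_eq_inner[of "P x"] by (simp add: power2_eq_square)
    ultimately have "norm (P x) * norm (P x) \<le> norm x * norm (P x)" by linarith
    then have "norm (P x) \<le> norm x" by (rule mult_right_le_imp_le) (rule pos)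
    then show ?thesis by simp
  qed
  have sa1: "inner (P a) b = inner a (P b)" for a b
  proof -
    have "(\<lambda>m. inner (A m a) b) \<longlonglongrightarrow> inner (P b) a"
    proof -
      have "(\<lambda>m. inner (A m a) b) = (\<lambda>m. inner (A m b) a)" by (rule ext) (use Asa[of _ a b] inner_commute[of a] in simp)
      then show ?thesis using cv[of b a] by simp
    qed
    then show ?thesis using LIMSEQ_unique[OF cv[of a b]] by (simp add: inner_commute)
  qed
  have sa2: "inner (\<i> *\<^sub>C P a) b = inner (\<i> *\<^sub>C a) (P b)" for a b
    using sa1[of "\<i> *\<^sub>C a" b] by (simp add: Pscale)
  have SA: "self_adjoint P"
    unfolding self_adjoint_def bounded_operator_def clinear_def cinner_def
  proof (intro conjI allI exI[of _ 1])
    show "P (x + y) = P x + P y" for x y by (rule Padd)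
    show "P (c *\<^sub>C x) = c *\<^sub>C P x" for c x by (rule Pscale)
    show "norm (P x) \<le> 1 * norm x" for x by (rule Pnorm)
    show "Complex (inner (P x) y) (inner (\<i> *\<^sub>C P x) y) = Complex (inner x (P y)) (inner (\<i> *\<^sub>C x) (P y))" for x y
      by (simp only: sa1 sa2)
  qed
  have "(\<lambda>m. K (sigma n (Suc m))) = A" by (simp add: A_def sigma_eq fun_eq_iff)
  then show ?thesis using SA wot by (intro exI[of _ P]) simp
qed

end
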